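(* Consider any connected measurement graph $\mathcal G$. For any $\delta>0$, the ML rule achieves \[ P_{\mathsf e}(\psi_{\mathrm{ml}})\le\frac{1}{(2n)^\delta-1}, \] provided that \[ \sup_{0<\alpha<1}\left\{(1-\alpha)\mathsf{Hel}_\alpha^{\min}\right\}\cdot\mathsf{mincut}\;\ge\;8\tau^{\mathrm{cut}}+(\delta+8)\log(2n)+4\log M. \]
   Context: Model: $n\ge2$, $M\ge2$, $\mathcal X=\{0,\dots,M-1\}$ with a group operation $+$; $x_i-x_j:=x_i+(-x_j)$; $\boldsymbol x+l\cdot\mathbf 1:=(x_1+l,\dots,x_n+l)$. Measurement graph $\mathcal G=(\mathcal V,\mathcal E)$ undirected on $\mathcal V=\{1,\dots,n\}$ (deterministic). $\mathbb P_0,\dots,\mathbb P_{M-1}$ are mutually absolutely continuous probability measures on an output space; given unknown $\boldsymbol x\in\mathcal X^n$, for each $(i,j)\in\mathcal E$, $i>j$, independently $y_{ij}\sim\mathbb P_{x_i-x_j}$. $\mathrm{dist}(\boldsymbol w,\boldsymbol x)=1-\max_l\mathbb I\{\boldsymbol w=\boldsymbol x+l\cdot\mathbf1\}$; $P_{\mathsf e}(\psi)=\max_{\boldsymbol x}\mathbb P\{\mathrm{dist}(\psi(\boldsymbol y),\boldsymbol x)\ne0\mid\boldsymbol x\}$; $\psi_{\mathrm{ml}}(\boldsymbol y)=\arg\max_{\boldsymbol x}\mathbb P\{\boldsymbol y\mid\boldsymbol x\}$. For $\alpha\in(0,1)$, $\mathsf{Hel}_\alpha(P\|Q)=\frac1{1-\alpha}[1-\int(\mathrm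 dP)^\alpha(\mathrm dQ)^{1-\alpha}]$ and $\mathsf{Hel}_\alpha^{\min}=\min_{l\ne k}\mathsf{Hel}_\alpha(\mathbb P_l\|\mathbb P_k)$. Graph metrics: $e(\mathcal S,\mathcal S^{\mathrm c})$ is the number of edges with one endpoint in $\mathcal S$ and the other in $\mathcal V\setminus\mathcal S$; $\mathsf{mincut}=\min\{e(\mathcal S,\mathcal S^{\mathrm c}):\emptyset\ne\mathcal S\subsetneq\mathcal V\}$; for an integer $m$, $\mathcal N(m)=\{\mathcal S\subseteq\mathcal V: e(\mathcal S,\mathcal S^{\mathrm c})\le m\}$; $\tau_k^{\mathrm{cut}}=\frac1k\log|\mathcal N(k\cdot\mathsf{mincut})|$ and the cut-homogeneity exponent is $\tau^{\mathrm{cut}}=\max_{k}\tau^{\mathrm{cut}}_k$, the maximum over positive integers $k$. *)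

theory Defs
  imports "HOL-Probability.Probability" "HOL-Algebra.Group"
begin

section \<open>Measurement graph (vertices V, undirected edges stored as pairs (i,j) with i > j)\<close>

definition graph_connected :: "nat set \<Rightarrow> (nat \<times> nat) set \<Rightarrow> bool" where
  "graph_connected V E \<longleftrightarrow> (\<forall>u\<in>V. \<forall>v\<in>V. (u, v) \<in> (E \<union> E\<inverse>)\<^sup>*)"

definition cut_size :: "(nat \<times> nat) set \<Rightarrow> nat set \<Rightarrow> nat" where
  "cut_size E S = card {e \<in> E. (fst e \<in> S) \<noteq> (snd e \<in> S)}"

definition mincut :: "nat set \<Rightarrow> (nat \<times> nat) set \<Rightarrow> nat" where
  "mincut V E = Min {cut_size E S | S. S \<noteq> {} \<and> S \<subset> V}"

definition cut_nbhd :: "nat set \<Rightarrow> (nat \<times> nat) set \<Rightarrow> nat \<Rightarrow> nat set set" where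
  "cut_nbhd V E m = {S. S \<subseteq> V \<and> cut_size E S \<le> m}"

definition tau_cut_k :: "nat set \<Rightarrow> (nat \<times> nat) set \<Rightarrow> nat \<Rightarrow> real" where
  "tau_cut_k V E k = ln (real (card (cut_nbhd V E (k * mincut V E)))) / real k"

text \<open>Cut-homogeneity exponent: maximum over positive integers k (the sup is attained).\<close>
definition tau_cut :: "nat set \<Rightarrow> (nat \<times> nat) set \<Rightarrow> real" where
  "tau_cut V E = (SUP k\<in>{1..}. tau_cut_k V E k)"

definition hel :: "'b measure \<Rightarrow> ('b \<Rightarrow> real) \<Rightarrow> ('b \<Rightarrow> real) \<Rightarrow> real \<Rightarrow> real" where
  "hel \<mu> f g \<alpha> = (1 / (1 - \<alpha>)) * (1 - (\<integral>y. f y powr \<alpha> * g y powr (1 - \<alpha>) \<partial>\<mu>))"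

definition hel_min :: "'b measure \<Rightarrow> (nat \<Rightarrow> 'b \<Rightarrow> real) \<Rightarrow> nat \<Rightarrow> real \<Rightarrow> real" where
  "hel_min \<mu> f M \<alpha> = Min {hel \<mu> (f l) (f k) \<alpha> | l k. l < M \<and> k < M \<and> l \<noteq> k}"

text \<open>Global shift x + l*1 (restricted to the vertex set, elements of X^n are extensional).\<close>
definition shift :: "nat monoid \<Rightarrow> nat set \<Rightarrow> (nat \<Rightarrow> nat) \<Rightarrow> nat \<Rightarrow> (nat \<Rightarrow> nat)" where
  "shift G V x l = restrict (\<lambda>i. x i \<otimes>\<^bsub>G\<^esub> l) V"

definition dist_zero :: "nat monoid \<Rightarrow> nat set \<Rightarrow> (nat \<Rightarrow> nat) \<Rightarrow> (nat \<Rightarrow> nat) \<Rightarrow> bool" where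
  "dist_zero G V w x \<longleftrightarrow> (\<exists>l\<in>carrier G. w = shift G V x l)"

definition gdiff :: "nat monoid \<Rightarrow> nat \<Rightarrow> nat \<Rightarrow> nat" where
  "gdiff G a b = a \<otimes>\<^bsub>G\<^esub> inv\<^bsub>G\<^esub> b"

definition obs_measure :: "nat monoid \<Rightarrow> 'b measure \<Rightarrow> (nat \<Rightarrow> 'b \<Rightarrow> real) \<Rightarrow> (nat \<times> nat) set
    \<Rightarrow> (nat \<Rightarrow> nat) \<Rightarrow> ((nat \<times> nat) \<Rightarrow> 'b) measure" where
  "obs_measure G \<mu> f E x =
     PiM E (\<lambda>e. density \<mu> (\<lambda>y. ennreal (f (gdiff G (x (fst e)) (x (snd e))) y)))"

definition likelihood :: "nat monoid \<Rightarrow> (nat \<Rightarrow> 'b \<Rightarrow> real) \<Rightarrow> (nat \<times> nat) set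
    \<Rightarrow> (nat \<Rightarrow> nat) \<Rightarrow> ((nat \<times> nat) \<Rightarrow> 'b) \<Rightarrow> real" where
  "likelihood G f E x y = (\<Prod>e\<in>E. f (gdiff G (x (fst e)) (x (snd e))) (y e))"

definition is_ml_rule :: "nat monoid \<Rightarrow> 'b measure \<Rightarrow> (nat \<Rightarrow> 'b \<Rightarrow> real) \<Rightarrow> nat set
    \<Rightarrow> (nat \<times> nat) set \<Rightarrow> (((nat \<times> nat) \<Rightarrow> 'b) \<Rightarrow> (nat \<Rightarrow> nat)) \<Rightarrow> bool" where
  "is_ml_rule G \<mu> f V E \<psi> \<longleftrightarrow>
     (\<forall>y\<in>space (PiM E (\<lambda>_. \<mu>)).
        \<psi> y \<in> (V \<rightarrow>\<^sub>E carrier G) \<and>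
        (\<forall>w\<in>V \<rightarrow>\<^sub>E carrier G. likelihood G f E w y \<le> likelihood G f E (\<psi> y) y))"

definition err_prob :: "nat monoid \<Rightarrow> 'b measure \<Rightarrow> (nat \<Rightarrow> 'b \<Rightarrow> real) \<Rightarrow> nat set
    \<Rightarrow> (nat \<times> nat) set \<Rightarrow> (((nat \<times> nat) \<Rightarrow> 'b) \<Rightarrow> (nat \<Rightarrow> nat)) \<Rightarrow> real" where
  "err_prob G \<mu> f V E \<psi> =
     Max {measure (obs_measure G \<mu> f E x)
            {y \<in> space (obs_measure G \<mu> f E x). \<not> dist_zero G V (\<psi> y) x}
          | x. x \<in> V \<rightarrow>\<^sub>E carrier G}"

end

theory Submission
  imports Defs
begin

lemma meas_prod_comp:
  assumes "finite I" "\<And>i. i \<in> I \<Longrightarrow> g i \<in> borel_measurable M"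
  shows "(\<lambda>y. \<Prod>i\<in>I. g i (y i) :: real) \<in> borel_measurable (PiM I (\<lambda>_. M))"
proof (rule borel_measurable_prod)
  fix i assume "i \<in> I"
  have "(\<lambda>y. y i) \<in> measurable (PiM I (\<lambda>_. M)) M"
    using measurable_component_singleton[OF \<open>i \<in> I\<close>, of "\<lambda>_. M"] by simp
  thus "(\<lambda>y. g i (y i)) \<in> borel_measurable (PiM I (\<lambda>_. M))"
    using assms(2)[OF \<open>i \<in> I\<close>] by (rule measurable_compose)
qed

lemma PiM_density_prod:
  fixes M :: "'b measure" and I :: "'i set" and g :: "'i \<Rightarrow> 'b \<Rightarrow> real"
  assumes fin: "finite I" and sf: "sigma_finite_measure M"
    and gm: "\<And>i. i\<in>I \<Longrightarrow> g i \<in> borel_measurable M"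
    and gn: "\<And>i y. i\<in>I \<Longrightarrow> 0 \<le> g i y"
    and gp: "\<And>i. i\<in>I \<Longrightarrow> prob_space (density M (\<lambda>y. ennreal (g i y)))"
  shows "PiM I (\<lambda>i. density M (\<lambda>y. ennreal (g i y)))
       = density (PiM I (\<lambda>_. M)) (\<lambda>y. ennreal (\<Prod>i\<in>I. g i (y i)))"
proof -
  define M' where "M' i = (if i \<in> I then density M (\<lambda>y. ennreal (g i y)) else M)" for i
  have eq1: "PiM I (\<lambda>i. density M (\<lambda>y. ennreal (g i y))) = PiM I M'"
    by (rule PiM_cong) (auto simp: M'_def)
  interpret P': product_sigma_finite M'
    by (rule product_sigma_finite.intro) (auto simp: M'_def sf intro: prob_space_imp_sigma_finite gp)
  interpret P: product_sigma_finite "\<lambda>_. M"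
    by (rule product_sigma_finite.intro) (rule sf)
  have Lm: "(\<lambda>y. \<Prod>i\<in>I. g i (y i)) \<in> borel_measurable (PiM I (\<lambda>_. M))"
    by (rule meas_prod_comp[OF fin gm])
  have "density (PiM I (\<lambda>_. M)) (\<lambda>y. ennreal (\<Prod>i\<in>I. g i (y i))) = PiM I M'"
  proof (rule P'.PiM_eqI[OF fin])
    show "sets (density (PiM I (\<lambda>_. M)) (\<lambda>y. ennreal (\<Prod>i\<in>I. g i (y i)))) = sets (PiM I M')"
      by (simp, rule sets_PiM_cong) (auto simp: M'_def)
  next
    fix A assume A: "\<And>i. i \<in> I \<Longrightarrow> A i \<in> sets (M' i)"
    hence A': "\<And>i. i \<in> I \<Longrightarrow> A i \<in> sets M" by (auto simp: M'_def)
    have PA: "Pi\<^sub>E I A \<in> sets (PiM I (\<lambda>_. M))"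
      by (rule sets_PiM_I_finite[OF fin A'])
    have "emeasure (density (PiM I (\<lambda>_. M)) (\<lambda>y. ennreal (\<Prod>i\<in>I. g i (y i)))) (Pi\<^sub>E I A)
       = (\<integral>\<^sup>+ y. ennreal (\<Prod>i\<in>I. g i (y i)) * indicator (Pi\<^sub>E I A) y \<partial>PiM I (\<lambda>_. M))"
      by (rule emeasure_density[OF _ PA]) (use Lm in measurable)
    also have "\<dots> = (\<integral>\<^sup>+ y. (\<Prod>i\<in>I. ennreal (g i (y i)) * indicator (A i) (y i)) \<partial>PiM I (\<lambda>_. M))"
    proof (rule nn_integral_cong)
      fix y assume y: "y \<in> space (PiM I (\<lambda>_. M))"
      hence ext: "y \<in> extensional I" by (auto simp: space_PiM PiE_def)
      have "(\<Prod>i\<in>I. ennreal (g i (y i)) * indicator (A i) (y i))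
          = (\<Prod>i\<in>I. ennreal (g i (y i))) * (\<Prod>i\<in>I. indicator (A i) (y i))"
        by (rule prod.distrib)
      also have "(\<Prod>i\<in>I. ennreal (g i (y i))) = ennreal (\<Prod>i\<in>I. g i (y i))"
        by (rule prod_ennreal) (simp add: gn)
      also have "(\<Prod>i\<in>I. indicator (A i) (y i) :: ennreal) = indicator (Pi\<^sub>E I A) y"
      proof (cases "y \<in> Pi\<^sub>E I A")
        case True thus ?thesis by (auto simp: indicator_def PiE_def Pi_def intro!: prod.neutral)
      next
        case False
        then obtain i where "i \<in> I" "y i \<notin> A i" using ext by (auto simp: PiE_def Pi_def)
        thus ?thesis using False fin by (auto simp: indicator_def intro!: prod_zero)
      qed
      finally show "ennreal (\<Prod>i\<in>I. g i (y i)) * indicator (Pi\<^sub>E I A) y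
          = (\<Prod>i\<in>I. ennreal (g i (y i)) * indicator (A i) (y i))" by simp
    qed
    also have "\<dots> = (\<Prod>i\<in>I. \<integral>\<^sup>+ z. ennreal (g i z) * indicator (A i) z \<partial>M)"
      by (rule P.product_nn_integral_prod[OF fin]) (use gm A' in measurable)
    also have "\<dots> = (\<Prod>i\<in>I. emeasure (M' i) (A i))"
    proof (rule prod.cong[OF refl])
      fix i assume i: "i \<in> I"
      show "(\<integral>\<^sup>+ z. ennreal (g i z) * indicator (A i) z \<partial>M) = emeasure (M' i) (A i)"
        using i A'[OF i] gm[OF i] by (simp add: M'_def emeasure_density)
    qed
    finally show "emeasure (density (PiM I (\<lambda>_. M)) (\<lambda>y. ennreal (\<Prod>i\<in>I. g i (y i)))) (Pi\<^sub>E I A)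
       = (\<Prod>i\<in>I. emeasure (M' i) (A i))" .
  qed
  thus ?thesis using eq1 by simp
qed


lemma dens_int:
  assumes fm: "f \<in> borel_measurable \<mu>" and fn: "\<And>y. 0 \<le> f y"
    and fp: "prob_space (density \<mu> (\<lambda>y. ennreal (f y)))"
  shows "integrable \<mu> f" "(\<integral>y. f y \<partial>\<mu>) = 1"
proof -
  have "emeasure (density \<mu> (\<lambda>y. ennreal (f y))) (space \<mu>) = 1"
    using prob_space.emeasure_space_1[OF fp] by simp
  hence "(\<integral>\<^sup>+ y. ennreal (f y) * indicator (space \<mu>) y \<partial>\<mu>) = 1"
    using fm by (simp add: emeasure_density)
  moreover have "(\<integral>\<^sup>+ y. ennreal (f y) * indicator (space \<mu>) y \<partial>\<mu>) = (\<integral>\<^sup>+ y. ennreal (f y) \<partial>\<mu>)"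
    by (rule nn_integral_cong) simp
  ultimately have "(\<integral>\<^sup>+ y. ennreal (f y) \<partial>\<mu>) = ennreal 1"
    by simp
  hence "integrable \<mu> f \<and> integral\<^sup>L \<mu> f = 1"
    using iffD1[OF nn_integral_eq_integrable[OF fm _ zero_le_one]] fn by simp
  thus "integrable \<mu> f" "(\<integral>y. f y \<partial>\<mu>) = 1" by auto
qed

lemma powr_geo_le:
  fixes u v \<alpha> :: real
  assumes "0 \<le> u" "0 \<le> v" "0 < \<alpha>" "\<alpha> < 1"
  shows "u powr \<alpha> * v powr (1-\<alpha>) \<le> u + v"
proof -
  let ?m = "max u v"
  have "u powr \<alpha> \<le> ?m powr \<alpha>" using assms by (intro powr_mono2) auto
  moreover have "v powr (1-\<alpha>) \<le> ?m powr (1-\<alpha>)" using assms by (intro powr_mono2) auto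
  ultimately have "u powr \<alpha> * v powr (1-\<alpha>) \<le> ?m powr \<alpha> * ?m powr (1-\<alpha>)"
    by (intro mult_mono) auto
  also have "\<dots> = ?m powr 1" by (simp add: powr_add[symmetric])
  also have "\<dots> = ?m" using assms by simp
  also have "\<dots> \<le> u + v" using assms by simp
  finally show ?thesis .
qed

lemma rho_bound:
  fixes \<mu> :: "'b measure" and f :: "nat \<Rightarrow> 'b \<Rightarrow> real"
  assumes \<alpha>: "0 < \<alpha>" "\<alpha> < 1"
    and fm: "\<And>l. l < M \<Longrightarrow> f l \<in> borel_measurable \<mu>"
    and fn: "\<And>l y. l < M \<Longrightarrow> f l y \<ge> 0"
    and fp: "\<And>l. l < M \<Longrightarrow> prob_space (density \<mu> (\<lambda>y. ennreal (f l y)))"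
    and ab: "a < M" "b < M"
    and hb: "a \<noteq> b \<Longrightarrow> h \<le> (1-\<alpha>) * hel \<mu> (f a) (f b) \<alpha>"
  shows "(\<integral>\<^sup>+ y. ennreal (f a y powr \<alpha> * f b y powr (1-\<alpha>)) \<partial>\<mu>)
            = ennreal (\<integral>y. f a y powr \<alpha> * f b y powr (1-\<alpha>) \<partial>\<mu>)"
    and "0 \<le> (\<integral>y. f a y powr \<alpha> * f b y powr (1-\<alpha>) \<partial>\<mu>)"
    and "(\<integral>y. f a y powr \<alpha> * f b y powr (1-\<alpha>) \<partial>\<mu>) \<le> (if a = b then 1 else exp (-h))"
proof -
  let ?g = "\<lambda>y. f a y powr \<alpha> * f b y powr (1-\<alpha>)"
  note ia = dens_int[OF fm[OF ab(1)] fn[OF ab(1)] fp[OF ab(1)]]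
  note ib = dens_int[OF fm[OF ab(2)] fn[OF ab(2)] fp[OF ab(2)]]
  have gm: "?g \<in> borel_measurable \<mu>"
  proof -
    note [measurable] = fm[OF ab(1)] fm[OF ab(2)]
    show ?thesis by measurable
  qed
  have gn: "\<And>y. 0 \<le> ?g y" by simp
  have gi: "integrable \<mu> ?g"
  proof (rule Bochner_Integration.integrable_bound[OF Bochner_Integration.integrable_add[OF ia(1) ib(1)] gm])
    show "AE y in \<mu>. norm (?g y) \<le> norm (f a y + f b y)"
    proof (rule AE_I2)
      fix y
      have u: "0 \<le> f a y" "0 \<le> f b y" using fn ab by auto
      have "?g y \<le> f a y + f b y" by (rule powr_geo_le[OF u \<alpha>])
      thus "norm (?g y) \<le> norm (f a y + f b y)" using u by simp
    qed
  qed
  show "(\<integral>\<^sup>+ y. ennreal (?g y) \<partial>\<mu>) = ennreal (integral\<^sup>L \<mu> ?g)"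
    using nn_integral_eq_integral[OF gi] by simp
  show "0 \<le> integral\<^sup>L \<mu> ?g" by (rule Bochner_Integration.integral_nonneg) simp
  show "integral\<^sup>L \<mu> ?g \<le> (if a = b then 1 else exp (-h))"
  proof (cases "a = b")
    case True
    have "\<And>y. ?g y = f a y"
    proof -
      fix y show "?g y = f a y" using True fn[OF ab(1), of y]
        by (cases "f a y = 0") (auto simp: powr_add[symmetric])
    qed
    hence "integral\<^sup>L \<mu> ?g = 1" using ia(2) by simp
    thus ?thesis using True by simp
  next
    case False
    have "h \<le> (1-\<alpha>) * hel \<mu> (f a) (f b) \<alpha>" by (rule hb[OF False])
    also have "\<dots> = 1 - integral\<^sup>L \<mu> ?g" using \<alpha> by (simp add: hel_def)
    finally have "integral\<^sup>L \<mu> ?g \<le> 1 - h" by simp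
    also have "1 - h \<le> exp (-h)" using exp_ge_add_one_self[of "-h"] by simp
    finally show ?thesis using False by simp
  qed
qed


lemma lik_pow_le:
  fixes u v \<alpha> :: real
  assumes "0 \<le> u" "u \<le> v" "0 < \<alpha>" "\<alpha> < 1"
  shows "u \<le> v powr \<alpha> * u powr (1-\<alpha>)"
proof (cases "u = 0")
  case True thus ?thesis by simp
next
  case False
  hence u: "0 < u" using assms by simp
  have "u = u powr 1" using u by simp
  also have "\<dots> = u powr \<alpha> * u powr (1-\<alpha>)" by (simp add: powr_add[symmetric])
  also have "\<dots> \<le> v powr \<alpha> * u powr (1-\<alpha>)"
    using assms u by (intro mult_right_mono powr_mono2) auto
  finally show ?thesis .
qed

lemma pair_bound:
  fixes \<mu> :: "'b measure" and f :: "nat \<Rightarrow> 'b \<Rightarrow> real" and E :: "'e set"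
    and a b :: "'e \<Rightarrow> nat"
  assumes fin: "finite E" and sf: "sigma_finite_measure \<mu>"
    and \<alpha>: "0 < \<alpha>" "\<alpha> < 1"
    and fm: "\<And>l. l < M \<Longrightarrow> f l \<in> borel_measurable \<mu>"
    and fn: "\<And>l y. l < M \<Longrightarrow> f l y \<ge> 0"
    and fp: "\<And>l. l < M \<Longrightarrow> prob_space (density \<mu> (\<lambda>y. ennreal (f l y)))"
    and aM: "\<And>e. e \<in> E \<Longrightarrow> a e < M" and bM: "\<And>e. e \<in> E \<Longrightarrow> b e < M"
    and hb: "\<And>e. e \<in> E \<Longrightarrow> b e \<noteq> a e \<Longrightarrow> h \<le> (1-\<alpha>) * hel \<mu> (f (b e)) (f (a e)) \<alpha>"
  shows "emeasure (density (PiM E (\<lambda>_. \<mu>)) (\<lambda>y. ennreal (\<Prod>e\<in>E. f (a e) (y e))))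
           {y \<in> space (PiM E (\<lambda>_. \<mu>)). (\<Prod>e\<in>E. f (a e) (y e)) \<le> (\<Prod>e\<in>E. f (b e) (y e))}
         \<le> ennreal (exp (-h) ^ card {e\<in>E. a e \<noteq> b e})"
proof -
  let ?P = "PiM E (\<lambda>_. \<mu>)"
  let ?La = "\<lambda>y. \<Prod>e\<in>E. f (a e) (y e)"
  let ?Lb = "\<lambda>y. \<Prod>e\<in>E. f (b e) (y e)"
  let ?A = "{y \<in> space ?P. ?La y \<le> ?Lb y}"
  let ?g = "\<lambda>e z. f (b e) z powr \<alpha> * f (a e) z powr (1-\<alpha>)"
  interpret P: product_sigma_finite "\<lambda>_. \<mu>"
    by (rule product_sigma_finite.intro) (rule sf)
  have Lam: "?La \<in> borel_measurable ?P" by (rule meas_prod_comp[OF fin]) (use fm aM in auto)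
  have Lbm: "?Lb \<in> borel_measurable ?P" by (rule meas_prod_comp[OF fin]) (use fm bM in auto)
  have Am: "?A \<in> sets ?P" using Lam Lbm by measurable
  have gm: "\<And>e. e \<in> E \<Longrightarrow> ?g e \<in> borel_measurable \<mu>"
  proof -
    fix e assume e: "e \<in> E"
    note [measurable] = fm[OF aM[OF e]] fm[OF bM[OF e]]
    show "?g e \<in> borel_measurable \<mu>" by measurable
  qed
  have rbe: "(\<integral>\<^sup>+ z. ennreal (?g e z) \<partial>\<mu>) = ennreal (\<integral>z. ?g e z \<partial>\<mu>)"
     "0 \<le> (\<integral>z. ?g e z \<partial>\<mu>)" "(\<integral>z. ?g e z \<partial>\<mu>) \<le> (if b e = a e then 1 else exp (-h))"
    if e: "e \<in> E" for e
    using rho_bound[where M=M and a="b e" and b="a e" and h=h and f=f and \<mu>=\<mu> and \<alpha>=\<alpha>,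
       OF \<alpha> fm fn fp bM[OF e] aM[OF e] hb[OF e]] by auto
  have "emeasure (density ?P (\<lambda>y. ennreal (?La y))) ?A = (\<integral>\<^sup>+ y. ennreal (?La y) * indicator ?A y \<partial>?P)"
    by (rule emeasure_density[OF _ Am]) (use Lam in measurable)
  also have "\<dots> \<le> (\<integral>\<^sup>+ y. (\<Prod>e\<in>E. ennreal (?g e (y e))) \<partial>?P)"
  proof (rule nn_integral_mono)
    fix y assume y: "y \<in> space ?P"
    have La0: "0 \<le> ?La y" using fn aM by (auto intro!: prod_nonneg)
    have "?La y * indicator ?A y \<le> ?Lb y powr \<alpha> * ?La y powr (1-\<alpha>)"
    proof (cases "y \<in> ?A")
      case True
      hence "?La y \<le> ?Lb y" by simp
      thus ?thesis using lik_pow_le[OF La0 _ \<alpha>] True by simp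
    next
      case False thus ?thesis by simp
    qed
    also have "\<dots> = (\<Prod>e\<in>E. ?g e (y e))"
      by (simp add: prod_powr_distrib prod.distrib)
    finally have le: "?La y * indicator ?A y \<le> (\<Prod>e\<in>E. ?g e (y e))" .
    have "ennreal (?La y) * indicator ?A y = ennreal (?La y * indicator ?A y)"
      by (simp add: indicator_def)
    also have "\<dots> \<le> ennreal (\<Prod>e\<in>E. ?g e (y e))" using le by (rule ennreal_leI)
    also have "\<dots> = (\<Prod>e\<in>E. ennreal (?g e (y e)))"
      by (rule prod_ennreal[symmetric]) simp
    finally show "ennreal (?La y) * indicator ?A y \<le> (\<Prod>e\<in>E. ennreal (?g e (y e)))" .
  qed
  also have "\<dots> = (\<Prod>e\<in>E. \<integral>\<^sup>+ z. ennreal (?g e z) \<partial>\<mu>)"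
    by (rule P.product_nn_integral_prod[OF fin]) (use gm in measurable)
  also have "\<dots> = (\<Prod>e\<in>E. ennreal (\<integral>z. ?g e z \<partial>\<mu>))"
    by (rule prod.cong[OF refl], rule rbe(1))
  also have "\<dots> = ennreal (\<Prod>e\<in>E. \<integral>z. ?g e z \<partial>\<mu>)"
    by (rule prod_ennreal) (rule rbe(2))
  also have "\<dots> \<le> ennreal (\<Prod>e\<in>E. (if b e = a e then 1 else exp (-h)))"
    by (intro ennreal_leI prod_mono conjI rbe(2) rbe(3))
  also have "(\<Prod>e\<in>E. (if b e = a e then 1 else exp (-h))) = (\<Prod>e\<in>E. (if a e \<noteq> b e then exp (-h) else 1))"
    by (rule prod.cong) auto
  also have "\<dots> = (\<Prod>e\<in>{e\<in>E. a e \<noteq> b e}. exp (-h))"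
    by (rule prod.inter_filter[OF fin, symmetric])
  also have "\<dots> = exp (-h) ^ card {e\<in>E. a e \<noteq> b e}" by simp
  finally show ?thesis .
qed


lemma card_filter_sum:
  "finite A \<Longrightarrow> card {x\<in>A. P x} = (\<Sum>x\<in>A. if P x then 1 else 0 :: nat)"
  by (simp add: sum.inter_filter[symmetric])

lemma cut_sum:
  fixes z :: "nat \<Rightarrow> 'c" and C :: "'c set"
  assumes finC: "finite C" and finE: "finite E"
    and EV: "\<And>e. e \<in> E \<Longrightarrow> fst e \<in> V \<and> snd e \<in> V"
    and zC: "\<And>i. i \<in> V \<Longrightarrow> z i \<in> C"
  shows "(\<Sum>g\<in>C. cut_size E {i\<in>V. z i = g}) \<le> 2 * card {e\<in>E. z (fst e) \<noteq> z (snd e)}"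
proof -
  have "(\<Sum>g\<in>C. cut_size E {i\<in>V. z i = g})
      = (\<Sum>g\<in>C. \<Sum>e\<in>E. if (fst e \<in> {i\<in>V. z i = g}) \<noteq> (snd e \<in> {i\<in>V. z i = g}) then 1 else 0)"
    unfolding cut_size_def by (rule sum.cong[OF refl], rule card_filter_sum[OF finE])
  also have "\<dots> = (\<Sum>e\<in>E. \<Sum>g\<in>C. if (fst e \<in> {i\<in>V. z i = g}) \<noteq> (snd e \<in> {i\<in>V. z i = g}) then 1 else 0)"
    by (rule sum.swap)
  also have "\<dots> \<le> (\<Sum>e\<in>E. if z (fst e) \<noteq> z (snd e) then 2 else 0 :: nat)"
  proof (rule sum_mono)
    fix e assume e: "e \<in> E"
    have "(\<Sum>g\<in>C. if (fst e \<in> {i\<in>V. z i = g}) \<noteq> (snd e \<in> {i\<in>V. z i = g}) then 1 else 0)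
        = card {g\<in>C. (z (fst e) = g) \<noteq> (z (snd e) = g)}"
      using EV[OF e] by (simp add: card_filter_sum[OF finC])
    also have "\<dots> \<le> (if z (fst e) \<noteq> z (snd e) then 2 else 0)"
    proof (cases "z (fst e) = z (snd e)")
      case True thus ?thesis by simp
    next
      case False
      have "{g\<in>C. (z (fst e) = g) \<noteq> (z (snd e) = g)} \<subseteq> {z (fst e), z (snd e)}" by auto
      hence "card {g\<in>C. (z (fst e) = g) \<noteq> (z (snd e) = g)} \<le> card {z (fst e), z (snd e)}"
        by (intro card_mono) auto
      also have "\<dots> \<le> 2" by (simp add: card_insert_if)
      finally show ?thesis using False by simp
    qed
    finally show "(\<Sum>g\<in>C. if (fst e \<in> {i\<in>V. z i = g}) \<noteq> (snd e \<in> {i\<in>V. z i = g}) then 1 else 0)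
        \<le> (if z (fst e) \<noteq> z (snd e) then 2 else 0 :: nat)" .
  qed
  also have "\<dots> = 2 * card {e\<in>E. z (fst e) \<noteq> z (snd e)}"
    by (simp add: sum.inter_filter[OF finE, symmetric])
  finally show ?thesis .
qed


lemma cut_nbhd_facts:
  assumes finV: "finite V"
  shows "finite (cut_nbhd V E k)" "{} \<in> cut_nbhd V E k" "card (cut_nbhd V E k) \<ge> 1"
    "card (cut_nbhd V E k) \<le> 2 ^ card V"
proof -
  have sub: "cut_nbhd V E k \<subseteq> Pow V" by (auto simp: cut_nbhd_def)
  show fin: "finite (cut_nbhd V E k)" using sub finV by (meson finite_Pow_iff finite_subset)
  show mem: "{} \<in> cut_nbhd V E k" by (simp add: cut_nbhd_def cut_size_def)
  show "card (cut_nbhd V E k) \<ge> 1" using fin mem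
    by (metis One_nat_def Suc_leI card_gt_0_iff empty_iff)
  have "card (cut_nbhd V E k) \<le> card (Pow V)" using sub finV by (intro card_mono) auto
  thus "card (cut_nbhd V E k) \<le> 2 ^ card V" using finV by (simp add: card_Pow)
qed

lemma tau_facts:
  assumes finV: "finite V"
  shows "bdd_above (tau_cut_k V E ` {1..})"
    and "\<And>k. k \<ge> 1 \<Longrightarrow> tau_cut_k V E k \<le> tau_cut V E"
    and "tau_cut V E \<ge> 0"
    and "\<And>k. k \<ge> 1 \<Longrightarrow> real (card (cut_nbhd V E (k * mincut V E))) \<le> exp (real k * tau_cut V E)"
proof -
  note cf = cut_nbhd_facts[OF finV]
  have tk: "0 \<le> tau_cut_k V E k \<and> tau_cut_k V E k \<le> 2 ^ card V" if "k \<ge> 1" for k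
  proof -
    let ?c = "real (card (cut_nbhd V E (k * mincut V E)))"
    have c1: "?c \<ge> 1" using cf(3)[of E "k * mincut V E"] by simp
    have c2: "?c \<le> 2 ^ card V" using cf(4)[of E "k * mincut V E"]
      by (metis of_nat_le_iff of_nat_numeral of_nat_power)
    have l0: "0 \<le> ln ?c" using c1 by simp
    have "ln ?c \<le> ?c - 1" using c1 by (intro ln_le_minus_one) simp
    hence l1: "ln ?c \<le> 2 ^ card V" using c2 by linarith
    have "ln ?c / real k \<le> ln ?c" using l0 that by (simp add: divide_le_eq mult_le_cancel_left1)
    thus ?thesis using l0 l1 that unfolding tau_cut_k_def by simp
  qed
  show bdd: "bdd_above (tau_cut_k V E ` {1..})"
    using tk by (intro bdd_aboveI[where M="2 ^ card V"]) auto
  show up: "tau_cut_k V E k \<le> tau_cut V E" if "k \<ge> 1" for k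
    unfolding tau_cut_def using that by (intro cSUP_upper[OF _ bdd]) auto
  show "tau_cut V E \<ge> 0" using tk[of 1] up[of 1] by simp
  show "real (card (cut_nbhd V E (k * mincut V E))) \<le> exp (real k * tau_cut V E)" if "k \<ge> 1" for k
  proof -
    let ?c = "real (card (cut_nbhd V E (k * mincut V E)))"
    have c1: "?c \<ge> 1" using cf(3)[of E "k * mincut V E"] by simp
    have "ln ?c / real k \<le> tau_cut V E" using up[OF that] unfolding tau_cut_k_def .
    hence "ln ?c \<le> real k * tau_cut V E" using that by (simp add: divide_le_eq mult.commute)
    hence "exp (ln ?c) \<le> exp (real k * tau_cut V E)" by simp
    thus ?thesis using c1 by simp
  qed
qed


lemma mincut_le:
  assumes finV: "finite V" and S: "S \<noteq> {}" "S \<subset> V"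
  shows "mincut V E \<le> cut_size E S"
proof -
  have "{cut_size E S | S. S \<noteq> {} \<and> S \<subset> V} \<subseteq> cut_size E ` Pow V" by auto
  hence fin: "finite {cut_size E S | S. S \<noteq> {} \<and> S \<subset> V}"
    using finV by (meson finite_Pow_iff finite_imageI finite_subset)
  show ?thesis unfolding mincut_def by (rule Min_le[OF fin]) (use S in auto)
qed

lemma cut_size_le: "finite E \<Longrightarrow> cut_size E S \<le> card E"
  unfolding cut_size_def by (intro card_mono) auto

lemma exp_r_eq:
  fixes n M :: nat
  assumes "n \<ge> 1" "M \<ge> 1"
  shows "exp (-(3 * ln (2 * real n) + 2 * ln (real M))) = 1 / ((2 * real n) ^ 3 * real M ^ 2)"
proof -
  have "exp (3 * ln (2 * real n)) = (2 * real n) ^ 3"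
    using assms exp_of_nat_mult[of 3 "ln (2 * real n)"] by simp
  moreover have "exp (2 * ln (real M)) = real M ^ 2"
    using assms exp_of_nat_mult[of 2 "ln (real M)"] by simp
  moreover have "exp (-(A + B)) = 1 / (exp A * exp B)" for A B :: real
    by (simp only: exp_minus exp_add inverse_eq_divide)
  ultimately show ?thesis by metis
qed

lemma frac_le_helper:
  fixes a c D :: real
  assumes "a * c \<le> D" "0 < D" "0 < c"
  shows "a / D \<le> 1 / c"
  using assms by (simp add: divide_simps mult.commute)

lemma Phi_bound:
  fixes n M :: nat and E :: "(nat \<times> nat) set" and hp :: real
  assumes n2: "n \<ge> 2" and M2: "M \<ge> 2" and finE: "finite E" and cardE: "card E \<le> n * n"
    and m1: "mincut {1..n} E \<ge> 1" and hp0: "hp \<ge> 0"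
    and hpm: "hp * real (mincut {1..n} E) \<ge> 8 * tau_cut {1..n} E + 7 * ln (2 * real n) + 4 * ln (real M)"
  shows "(\<Sum>S\<in>{S. S \<noteq> {} \<and> S \<subset> {1..n}}. exp (-(hp/2) * real (cut_size E S))) \<le> 1 / (4 * real M)"
proof -
  define V where "V = {1..n::nat}"
  define m where "m = mincut V E"
  define \<tau> where "\<tau> = tau_cut V E"
  define L where "L = ln (2 * real n)"
  define Prop where "Prop = {S. S \<noteq> {} \<and> S \<subset> V}"
  define \<phi> where "\<phi> S = exp (-(hp/2) * real (cut_size E S))" for S
  define kf where "kf S = cut_size E S div m" for S
  define r where "r = exp (-(3 * L + 2 * ln (real M)))"
  have finV: "finite V" by (simp add: V_def)
  have m1': "m \<ge> 1" using m1 by (simp add: m_def V_def)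
  have hpm': "hp * real m \<ge> 8 * \<tau> + 7 * L + 4 * ln (real M)"
    using hpm by (simp add: m_def \<tau>_def L_def V_def)
  have \<tau>0: "\<tau> \<ge> 0" unfolding \<tau>_def by (rule tau_facts(3)[OF finV])
  have L0: "L \<ge> 0" using n2 by (simp add: L_def)
  have lM0: "ln (real M) \<ge> 0" using M2 by simp
  have finProp: "finite Prop" unfolding Prop_def using finV
    by (metis (no_types, lifting) Collect_mono Pow_def finite_Pow_iff finite_subset psubset_imp_subset)
  have cutm: "m \<le> cut_size E S" if "S \<in> Prop" for S
    using that mincut_le[OF finV] by (auto simp: Prop_def m_def)
  have kf_range: "kf ` Prop \<subseteq> {1..card E}"
  proof
    fix k assume "k \<in> kf ` Prop"
    then obtain S where S: "S \<in> Prop" "k = kf S" by auto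
    have "1 \<le> cut_size E S div m" using div_le_mono[OF cutm[OF S(1)], of m] m1' by simp
    moreover have "cut_size E S div m \<le> card E"
      using cut_size_le[OF finE, of S] by (meson div_le_dividend le_trans)
    ultimately show "k \<in> {1..card E}" using S by (simp add: kf_def)
  qed
  have "(\<Sum>S\<in>Prop. \<phi> S) = (\<Sum>k\<in>{1..card E}. \<Sum>S\<in>{S\<in>Prop. kf S = k}. \<phi> S)"
    by (rule sum.group[OF finProp _ kf_range, symmetric]) simp
  also have "\<dots> \<le> (\<Sum>k\<in>{1..card E}. r)"
  proof (rule sum_mono)
    fix k assume k: "k \<in> {1..card E}"
    hence k1: "k \<ge> 1" by simp
    have "(\<Sum>S\<in>{S\<in>Prop. kf S = k}. \<phi> S) \<le> real (card {S\<in>Prop. kf S = k}) * exp (-(hp/2) * real (k * m))"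
    proof (rule sum_bounded_above)
      fix S assume S: "S \<in> {S\<in>Prop. kf S = k}"
      have kS: "cut_size E S div m = k" using S by (simp add: kf_def)
      have "k * m \<le> cut_size E S" using kS div_mult_mod_eq[of "cut_size E S" m] by (metis le_add1)
      hence "real (k * m) \<le> real (cut_size E S)" by linarith
      thus "\<phi> S \<le> exp (-(hp/2) * real (k * m))" unfolding \<phi>_def
        using hp0 by (intro exp_mono) (simp add: mult_left_mono)
    qed
    also have "real (card {S\<in>Prop. kf S = k}) \<le> real (card (cut_nbhd V E ((k+1) * m)))"
    proof -
      have "{S\<in>Prop. kf S = k} \<subseteq> cut_nbhd V E ((k+1) * m)"
      proof
        fix S assume S: "S \<in> {S\<in>Prop. kf S = k}"
        have "cut_size E S < (cut_size E S div m + 1) * m"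
          using m1' by (metis add.commute div_mult_mod_eq mod_less_divisor
              add_less_cancel_left distrib_right mult_1 zero_less_one_class.zero_le_one le_trans
              less_le_trans nat_less_le linorder_not_le zero_less_iff_neq_zero One_nat_def Suc_le_eq)
        thus "S \<in> cut_nbhd V E ((k+1) * m)" using S
          by (auto simp: cut_nbhd_def Prop_def kf_def)
      qed
      thus ?thesis using cut_nbhd_facts(1)[OF finV] by (intro of_nat_mono card_mono) auto
    qed
    also have "\<dots> \<le> exp (real (k+1) * \<tau>)"
      unfolding \<tau>_def m_def by (rule tau_facts(4)[OF finV]) simp
    finally have "(\<Sum>S\<in>{S\<in>Prop. kf S = k}. \<phi> S) \<le> exp (real (k+1) * \<tau>) * exp (-(hp/2) * real (k * m))"
      by (simp add: mult_right_mono)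
    also have "\<dots> = exp (real (k+1) * \<tau> - (hp * real m / 2) * real k)"
      by (simp add: exp_add[symmetric] algebra_simps)
    also have "\<dots> \<le> r"
    proof -
      have f0: "(hp * real m) * real k \<ge> (8 * \<tau> + 7 * L + 4 * ln (real M)) * real k"
        using hpm' by (intro mult_right_mono) auto
      have rk: "1 \<le> real k" using k1 by simp
      have f1: "\<tau> * 1 \<le> \<tau> * real k" using rk \<tau>0 by (rule mult_left_mono)
      have f2: "L * 1 \<le> L * real k" using rk L0 by (rule mult_left_mono)
      have f3: "ln (real M) * 1 \<le> ln (real M) * real k" using rk lM0 by (rule mult_left_mono)
      have e1: "(8 * \<tau> + 7 * L + 4 * ln (real M)) * real k = 8 * (\<tau> * real k) + 7 * (L * real k) + 4 * (ln (real M) * real k)"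
        by (simp add: algebra_simps)
      have e2: "real (k+1) * \<tau> = \<tau> * real k + \<tau>" by (simp add: algebra_simps)
      have e3: "(hp * real m / 2) * real k = ((hp * real m) * real k) / 2" by simp
      have "real (k+1) * \<tau> - (hp * real m / 2) * real k \<le> -(3 * L + 2 * ln (real M))"
        using f0 f1 f2 f3 e1 e2 e3 \<tau>0 L0 lM0 by linarith
      thus ?thesis unfolding r_def by simp
    qed
    finally show "(\<Sum>S\<in>{S\<in>Prop. kf S = k}. \<phi> S) \<le> r" .
  qed
  also have "\<dots> = real (card E) * r" by simp
  also have "\<dots> \<le> real (n * n) * r" using cardE by (intro mult_right_mono) (auto simp: r_def simp del: of_nat_mult intro: of_nat_mono)
  also have "\<dots> = real (n*n) / ((2 * real n) ^ 3 * real M ^ 2)"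
    unfolding r_def L_def using n2 M2 by (subst exp_r_eq) auto
  also have "\<dots> \<le> 1 / (4 * real M)"
  proof -
    have "real n * real n * (4 * real M) \<le> (2 * real n) ^ 3 * real M ^ 2"
    proof -
      have eq: "(2 * real n) ^ 3 * real M ^ 2 = (real n * real n * (4 * real M)) * (2 * real n * real M)"
        by (simp add: power2_eq_square power3_eq_cube algebra_simps)
      have ge1: "2 * real n * real M \<ge> 1"
      proof -
        have "1 * 1 \<le> real n * real M" using n2 M2 by (intro mult_mono) auto
        thus ?thesis by simp
      qed
      have "real n * real n * (4 * real M) * 1 \<le> (real n * real n * (4 * real M)) * (2 * real n * real M)"
        using ge1 by (intro mult_left_mono) auto
      thus ?thesis unfolding eq by (metis mult_1_right)
    qed
    moreover have "0 < (2 * real n) ^ 3 * real M ^ 2" using n2 M2 by simp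
    moreover have "0 < 4 * real M" using M2 by simp
    ultimately show ?thesis by (intro frac_le_helper) auto
  qed
  finally show ?thesis by (simp add: Prop_def V_def \<phi>_def)
qed


lemma exp_quarter_le_2: "exp (1/4::real) \<le> 2"
proof -
  have "exp (1/4::real) ^ 4 = exp (real 4 * (1/4))" by (rule exp_of_nat_mult[symmetric])
  also have "\<dots> = exp 1" by simp
  also have "\<dots> \<le> 3" by (rule exp_le)
  also have "(3::real) \<le> 2 ^ 4" by simp
  finally have "exp (1/4::real) ^ Suc 3 \<le> 2 ^ Suc 3" by simp
  thus ?thesis by (rule power_le_imp_le_base) simp
qed

lemma nonconst_sum:
  fixes n M :: nat and E :: "(nat \<times> nat) set" and C :: "'c set" and hp :: real
  assumes n2: "n \<ge> 2" and M2: "M \<ge> 2" and finE: "finite E"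
    and EV: "\<And>e. e \<in> E \<Longrightarrow> fst e \<in> {1..n} \<and> snd e \<in> {1..n}"
    and cardE: "card E \<le> n * n"
    and m1: "mincut {1..n} E \<ge> 1" and hp0: "hp \<ge> 0"
    and hpm: "hp * real (mincut {1..n} E) \<ge> 8 * tau_cut {1..n} E + 7 * ln (2 * real n) + 4 * ln (real M)"
    and finC: "finite C" and cardC: "card C = M"
  shows "(\<Sum>z\<in>{z\<in>{1..n} \<rightarrow>\<^sub>E C. \<forall>g\<in>C. \<exists>i\<in>{1..n}. z i \<noteq> g}.
           exp (-hp * real (card {e\<in>E. z (fst e) \<noteq> z (snd e)}))) \<le> 1"
proof -
  define V where "V = {1..n::nat}"
  define Znc where "Znc = {z\<in>V \<rightarrow>\<^sub>E C. \<forall>g\<in>C. \<exists>i\<in>V. z i \<noteq> g}"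
  define Prop where "Prop = {S. S \<noteq> {} \<and> S \<subset> V}"
  define P where "P = insert {} Prop"
  define \<phi> where "\<phi> S = exp (-(hp/2) * real (cut_size E S))" for S
  define \<Gamma> where "\<Gamma> z = restrict (\<lambda>g. {i\<in>V. z i = g}) C" for z :: "nat \<Rightarrow> 'c"
  define e0 where "e0 = restrict (\<lambda>_. {}::nat set) C"
  define F where "F = (PiE C (\<lambda>_. P)) - {e0}"
  define \<Phi> where "\<Phi> = (\<Sum>S\<in>Prop. \<phi> S)"
  have finV: "finite V" by (simp add: V_def)
  have finProp: "finite Prop" unfolding Prop_def using finV
    by (metis (no_types, lifting) Collect_mono Pow_def finite_Pow_iff finite_subset psubset_imp_subset)
  have finP: "finite P" using finProp by (simp add: P_def)
  have finPi: "finite (PiE C (\<lambda>_. P))" using finC finP by (intro finite_PiE) auto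
  have finZ: "finite Znc" unfolding Znc_def using finV finC
    by (intro finite_subset[OF _ finite_PiE[OF finV, of "\<lambda>_. C"]]) auto
  have \<phi>0: "\<phi> {} = 1" by (simp add: \<phi>_def cut_size_def)
  have \<phi>nn: "\<phi> S \<ge> 0" for S by (simp add: \<phi>_def)
  have \<Phi>bound: "\<Phi> \<le> 1 / (4 * real M)"
    unfolding \<Phi>_def \<phi>_def Prop_def V_def by (rule Phi_bound[OF n2 M2 finE cardE m1 hp0 hpm])
  have \<Phi>0: "\<Phi> \<ge> 0" unfolding \<Phi>_def by (intro sum_nonneg \<phi>nn)
  have step1: "exp (-hp * real (card {e\<in>E. z (fst e) \<noteq> z (snd e)})) \<le> (\<Prod>g\<in>C. \<phi> (\<Gamma> z g))"
    if z: "z \<in> Znc" for z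
  proof -
    have zC: "\<And>i. i \<in> V \<Longrightarrow> z i \<in> C" using z by (auto simp: Znc_def)
    have cs: "(\<Sum>g\<in>C. cut_size E {i\<in>V. z i = g}) \<le> 2 * card {e\<in>E. z (fst e) \<noteq> z (snd e)}"
      by (rule cut_sum[OF finC finE _ zC]) (use EV in \<open>auto simp: V_def\<close>)
    have "(\<Prod>g\<in>C. \<phi> (\<Gamma> z g)) = (\<Prod>g\<in>C. exp (-(hp/2) * real (cut_size E {i\<in>V. z i = g})))"
      by (rule prod.cong) (auto simp: \<phi>_def \<Gamma>_def)
    also have "\<dots> = exp (\<Sum>g\<in>C. -(hp/2) * real (cut_size E {i\<in>V. z i = g}))"
      by (rule exp_sum[symmetric]) (rule finC)
    also have "(\<Sum>g\<in>C. -(hp/2) * real (cut_size E {i\<in>V. z i = g}))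
        = -(hp/2) * real (\<Sum>g\<in>C. cut_size E {i\<in>V. z i = g})"
      by (simp add: sum_distrib_left)
    finally have eq: "(\<Prod>g\<in>C. \<phi> (\<Gamma> z g)) = exp (-(hp/2) * real (\<Sum>g\<in>C. cut_size E {i\<in>V. z i = g}))" .
    have c1: "real (\<Sum>g\<in>C. cut_size E {i\<in>V. z i = g}) \<le> real (2 * card {e\<in>E. z (fst e) \<noteq> z (snd e)})"
      using cs by (rule of_nat_mono)
    have c2: "(hp/2) * real (\<Sum>g\<in>C. cut_size E {i\<in>V. z i = g}) \<le> (hp/2) * real (2 * card {e\<in>E. z (fst e) \<noteq> z (snd e)})"
      using c1 hp0 by (intro mult_left_mono) auto
    have c3: "(hp/2) * real (2 * card {e\<in>E. z (fst e) \<noteq> z (snd e)}) = hp * real (card {e\<in>E. z (fst e) \<noteq> z (snd e)})"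
      by simp
    have "-(hp/2) * real (\<Sum>g\<in>C. cut_size E {i\<in>V. z i = g}) \<ge> -hp * real (card {e\<in>E. z (fst e) \<noteq> z (snd e)})"
      using c2 c3 by linarith
    thus ?thesis unfolding eq by simp
  qed
  have injG: "inj_on \<Gamma> Znc"
  proof (rule inj_onI)
    fix z z' assume z: "z \<in> Znc" and z': "z' \<in> Znc" and eq: "\<Gamma> z = \<Gamma> z'"
    show "z = z'"
    proof (rule extensionalityI)
      show "z \<in> extensional V" "z' \<in> extensional V" using z z' by (auto simp: Znc_def PiE_def)
    next
      fix i assume i: "i \<in> V"
      have g: "z i \<in> C" using z i by (auto simp: Znc_def)
      have "i \<in> \<Gamma> z (z i)" using i g by (simp add: \<Gamma>_def)
      hence "i \<in> \<Gamma> z' (z i)" using eq by simp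
      thus "z i = z' i" using g by (simp add: \<Gamma>_def)
    qed
  qed
  have GF: "\<Gamma> ` Znc \<subseteq> F"
  proof
    fix T assume "T \<in> \<Gamma> ` Znc"
    then obtain z where z: "z \<in> Znc" and T: "T = \<Gamma> z" by auto
    have "T \<in> PiE C (\<lambda>_. P)"
    proof -
      have "{i\<in>V. z i = g} \<in> P" if g: "g \<in> C" for g
      proof (cases "{i\<in>V. z i = g} = {}")
        case True thus ?thesis by (simp add: P_def)
      next
        case False
        obtain i where "i \<in> V" "z i \<noteq> g" using z g by (auto simp: Znc_def)
        hence "{i\<in>V. z i = g} \<subset> V" by auto
        thus ?thesis using False by (simp add: P_def Prop_def)
      qed
      thus ?thesis unfolding T \<Gamma>_def by auto
    qed
    moreover have "T \<noteq> e0"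
    proof
      assume "T = e0"
      have 1: "1 \<in> V" using n2 by (simp add: V_def)
      have g: "z 1 \<in> C" using z 1 by (auto simp: Znc_def)
      have "1 \<in> T (z 1)" using 1 g by (simp add: T \<Gamma>_def)
      thus False using \<open>T = e0\<close> g by (simp add: e0_def)
    qed
    ultimately show "T \<in> F" by (simp add: F_def)
  qed
  have "(\<Sum>z\<in>Znc. exp (-hp * real (card {e\<in>E. z (fst e) \<noteq> z (snd e)})))
       \<le> (\<Sum>z\<in>Znc. \<Prod>g\<in>C. \<phi> (\<Gamma> z g))"
    by (intro sum_mono step1)
  also have "\<dots> = (\<Sum>T\<in>\<Gamma> ` Znc. \<Prod>g\<in>C. \<phi> (T g))"
    by (rule sum.reindex[OF injG, symmetric, unfolded comp_def])
  also have "\<dots> \<le> (\<Sum>T\<in>F. \<Prod>g\<in>C. \<phi> (T g))"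
    by (rule sum_mono2) (use finPi GF \<phi>nn in \<open>auto simp: F_def intro: prod_nonneg\<close>)
  also have "\<dots> = (\<Sum>T\<in>PiE C (\<lambda>_. P). \<Prod>g\<in>C. \<phi> (T g)) - (\<Prod>g\<in>C. \<phi> (e0 g))"
  proof -
    have "e0 \<in> PiE C (\<lambda>_. P)" by (auto simp: e0_def P_def)
    thus ?thesis unfolding F_def using finPi by (simp add: sum_diff1)
  qed
  also have "(\<Prod>g\<in>C. \<phi> (e0 g)) = 1" by (simp add: e0_def \<phi>0)
  also have "(\<Sum>T\<in>PiE C (\<lambda>_. P). \<Prod>g\<in>C. \<phi> (T g)) = (\<Prod>g\<in>C. \<Sum>S\<in>P. \<phi> S)"
    by (rule prod_sum_PiE[OF finC, symmetric]) (use finP in auto)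
  also have "\<dots> = (1 + \<Phi>) ^ M"
  proof -
    have "{} \<notin> Prop" by (simp add: Prop_def)
    hence "(\<Sum>S\<in>P. \<phi> S) = 1 + \<Phi>" using finProp by (simp add: P_def \<Phi>_def \<phi>0)
    thus ?thesis using cardC by simp
  qed
  also have "(1 + \<Phi>) ^ M - 1 \<le> 1"
  proof -
    have "(1 + \<Phi>) ^ M \<le> exp \<Phi> ^ M"
      using \<Phi>0 by (intro power_mono) (auto simp: add.commute)
    also have "\<dots> = exp (real M * \<Phi>)" by (rule exp_of_nat_mult[symmetric])
    also have "\<dots> \<le> exp (1/4)"
    proof -
      have "real M * \<Phi> \<le> real M * (1 / (4 * real M))" using \<Phi>bound by (intro mult_left_mono) auto
      also have "\<dots> = 1/4" using M2 by simp
      finally show ?thesis by simp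
    qed
    also have "\<dots> \<le> 2" by (rule exp_quarter_le_2)
    finally show ?thesis by simp
  qed
  finally show ?thesis by (simp add: Znc_def V_def)
qed


lemma (in group) gd_iff:
  assumes "p \<in> carrier G" "q \<in> carrier G" "u \<in> carrier G" "v \<in> carrier G"
  shows "(u \<otimes> inv v = p \<otimes> inv q) \<longleftrightarrow> (inv p \<otimes> u = inv q \<otimes> v)"
proof
  assume h: "u \<otimes> inv v = p \<otimes> inv q"
  have "inv p \<otimes> u = inv p \<otimes> (u \<otimes> inv v) \<otimes> v" using assms by (simp add: m_assoc)
  also have "\<dots> = inv p \<otimes> (p \<otimes> inv q) \<otimes> v" using h by simp
  also have "\<dots> = inv q \<otimes> v" using assms by (simp add: m_assoc[symmetric])
  finally show "inv p \<otimes> u = inv q \<otimes> v" .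
next
  assume h: "inv p \<otimes> u = inv q \<otimes> v"
  have "u \<otimes> inv v = p \<otimes> (inv p \<otimes> u) \<otimes> inv v" using assms by (simp add: m_assoc[symmetric])
  also have "\<dots> = p \<otimes> (inv q \<otimes> v) \<otimes> inv v" using h by simp
  also have "\<dots> = p \<otimes> inv q" using assms by (simp add: m_assoc)
  finally show "u \<otimes> inv v = p \<otimes> inv q" .
qed

definition zmap :: "nat monoid \<Rightarrow> nat set \<Rightarrow> (nat \<Rightarrow> nat) \<Rightarrow> (nat \<Rightarrow> nat) \<Rightarrow> nat \<Rightarrow> nat" where
  "zmap G V x w = restrict (\<lambda>i. inv\<^bsub>G\<^esub> (x i) \<otimes>\<^bsub>G\<^esub> w i) V"

lemma zmap_facts:
  assumes grp: "group G" and x: "x \<in> V \<rightarrow>\<^sub>E carrier G"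
    and EV: "\<forall>e\<in>E. fst e \<in> V \<and> snd e \<in> V"
  shows "\<And>w. w \<in> V \<rightarrow>\<^sub>E carrier G \<Longrightarrow> zmap G V x w \<in> V \<rightarrow>\<^sub>E carrier G"
    and "\<And>w. w \<in> V \<rightarrow>\<^sub>E carrier G \<Longrightarrow>
       {e\<in>E. gdiff G (w (fst e)) (w (snd e)) \<noteq> gdiff G (x (fst e)) (x (snd e))}
       = {e\<in>E. zmap G V x w (fst e) \<noteq> zmap G V x w (snd e)}"
    and "inj_on (zmap G V x) (V \<rightarrow>\<^sub>E carrier G)"
    and "\<And>w. w \<in> V \<rightarrow>\<^sub>E carrier G \<Longrightarrow> \<not> dist_zero G V w x \<Longrightarrow>
           \<forall>g\<in>carrier G. \<exists>i\<in>V. zmap G V x w i \<noteq> g"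
proof -
  interpret group G by (rule grp)
  have xc: "\<And>i. i \<in> V \<Longrightarrow> x i \<in> carrier G" using x by auto
  show "zmap G V x w \<in> V \<rightarrow>\<^sub>E carrier G" if w: "w \<in> V \<rightarrow>\<^sub>E carrier G" for w
    using w xc by (auto simp: zmap_def)
  show "{e\<in>E. gdiff G (w (fst e)) (w (snd e)) \<noteq> gdiff G (x (fst e)) (x (snd e))}
       = {e\<in>E. zmap G V x w (fst e) \<noteq> zmap G V x w (snd e)}" if w: "w \<in> V \<rightarrow>\<^sub>E carrier G" for w
  proof (rule Collect_cong)
    fix e
    show "(e \<in> E \<and> gdiff G (w (fst e)) (w (snd e)) \<noteq> gdiff G (x (fst e)) (x (snd e))) =
          (e \<in> E \<and> zmap G V x w (fst e) \<noteq> zmap G V x w (snd e))"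
    proof (cases "e \<in> E")
      case True
      hence V: "fst e \<in> V" "snd e \<in> V" using EV by auto
      have wc: "w (fst e) \<in> carrier G" "w (snd e) \<in> carrier G" using w V by auto
      show ?thesis using True V gd_iff[OF xc[OF V(1)] xc[OF V(2)] wc] by (simp add: gdiff_def zmap_def)
    qed simp
  qed
  show "inj_on (zmap G V x) (V \<rightarrow>\<^sub>E carrier G)"
  proof (rule inj_onI)
    fix w w' assume w: "w \<in> V \<rightarrow>\<^sub>E carrier G" and w': "w' \<in> V \<rightarrow>\<^sub>E carrier G"
      and eq: "zmap G V x w = zmap G V x w'"
    show "w = w'"
    proof (rule extensionalityI)
      show "w \<in> extensional V" "w' \<in> extensional V" using w w' by (auto simp: PiE_def)
    next
      fix i assume i: "i \<in> V"
      have "zmap G V x w i = zmap G V x w' i" using eq by simp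
      hence "inv\<^bsub>G\<^esub> (x i) \<otimes>\<^bsub>G\<^esub> w i = inv\<^bsub>G\<^esub> (x i) \<otimes>\<^bsub>G\<^esub> w' i" using i by (simp add: zmap_def)
      thus "w i = w' i" using i w w' xc[OF i] by (metis PiE_mem Units_eq Units_l_cancel inv_closed)
    qed
  qed
  show "\<forall>g\<in>carrier G. \<exists>i\<in>V. zmap G V x w i \<noteq> g"
    if w: "w \<in> V \<rightarrow>\<^sub>E carrier G" and nd: "\<not> dist_zero G V w x" for w
  proof (rule ccontr)
    assume "\<not> (\<forall>g\<in>carrier G. \<exists>i\<in>V. zmap G V x w i \<noteq> g)"
    then obtain g where g: "g \<in> carrier G" and all: "\<And>i. i \<in> V \<Longrightarrow> zmap G V x w i = g" by auto
    have "w = shift G V x g"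
    proof (rule extensionalityI)
      show "w \<in> extensional V" using w by (auto simp: PiE_def)
      show "shift G V x g \<in> extensional V" by (simp add: shift_def)
    next
      fix i assume i: "i \<in> V"
      have "inv\<^bsub>G\<^esub> (x i) \<otimes>\<^bsub>G\<^esub> w i = g" using all[OF i] i by (simp add: zmap_def)
      hence "w i = x i \<otimes>\<^bsub>G\<^esub> g" using i w xc[OF i] g
        by (metis PiE_mem inv_solve_left)
      thus "w i = shift G V x g i" using i by (simp add: shift_def)
    qed
    hence "dist_zero G V w x" using g by (auto simp: dist_zero_def)
    thus False using nd by simp
  qed
qed


lemma W_facts:
  fixes n M :: nat and E :: "(nat \<times> nat) set" and G :: "nat monoid" and hp :: real
  assumes grp: "group G" and carr: "carrier G = {..<M}" and n2: "n \<ge> 2" and M2: "M \<ge> 2"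
    and finE: "finite E"
    and EV: "\<And>e. e \<in> E \<Longrightarrow> fst e \<in> {1..n} \<and> snd e \<in> {1..n}"
    and cardE: "card E \<le> n * n"
    and m1: "mincut {1..n} E \<ge> 1" and hp0: "hp \<ge> 0"
    and hpm: "hp * real (mincut {1..n} E) \<ge> 8 * tau_cut {1..n} E + 7 * ln (2 * real n) + 4 * ln (real M)"
    and x: "x \<in> {1..n} \<rightarrow>\<^sub>E carrier G"
  shows "(\<Sum>w\<in>{w\<in>{1..n} \<rightarrow>\<^sub>E carrier G. \<not> dist_zero G {1..n} w x}.
           exp (-hp * real (card {e\<in>E. gdiff G (w (fst e)) (w (snd e)) \<noteq> gdiff G (x (fst e)) (x (snd e))}))) \<le> 1"
    and "\<And>w. w \<in> {1..n} \<rightarrow>\<^sub>E carrier G \<Longrightarrow> \<not> dist_zero G {1..n} w x \<Longrightarrow>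
           mincut {1..n} E \<le> card {e\<in>E. gdiff G (w (fst e)) (w (snd e)) \<noteq> gdiff G (x (fst e)) (x (snd e))}"
proof -
  define V where "V = {1..n::nat}"
  define W where "W = {w\<in>V \<rightarrow>\<^sub>E carrier G. \<not> dist_zero G V w x}"
  define Znc where "Znc = {z\<in>V \<rightarrow>\<^sub>E carrier G. \<forall>g\<in>carrier G. \<exists>i\<in>V. z i \<noteq> g}"
  have EV': "\<And>e. e \<in> E \<Longrightarrow> fst e \<in> V \<and> snd e \<in> V" using EV by (simp add: V_def)
  have x': "x \<in> V \<rightarrow>\<^sub>E carrier G" using x by (simp add: V_def)
  have EVb: "\<forall>e\<in>E. fst e \<in> V \<and> snd e \<in> V" using EV' by blast
  note zf = zmap_facts[where E=E, OF grp x' EVb]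
  have finC: "finite (carrier G)" by (simp add: carr)
  have cardC: "card (carrier G) = M" by (simp add: carr)
  have finZ: "finite Znc" unfolding Znc_def
    by (rule finite_subset[OF _ finite_PiE[of V "\<lambda>_. carrier G"]]) (auto simp: V_def finC)
  have WZ: "zmap G V x ` W \<subseteq> Znc"
    using zf(1) zf(4) by (auto simp: W_def Znc_def)
  have injW: "inj_on (zmap G V x) W"
    using zf(3) by (rule inj_on_subset) (auto simp: W_def)
  have "(\<Sum>w\<in>W. exp (-hp * real (card {e\<in>E. gdiff G (w (fst e)) (w (snd e)) \<noteq> gdiff G (x (fst e)) (x (snd e))})))
      = (\<Sum>w\<in>W. exp (-hp * real (card {e\<in>E. zmap G V x w (fst e) \<noteq> zmap G V x w (snd e)})))"
    by (rule sum.cong[OF refl]) (simp add: zf(2) W_def)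
  also have "\<dots> = (\<Sum>z\<in>zmap G V x ` W. exp (-hp * real (card {e\<in>E. z (fst e) \<noteq> z (snd e)})))"
    by (rule sum.reindex[OF injW, symmetric, unfolded comp_def])
  also have "\<dots> \<le> (\<Sum>z\<in>Znc. exp (-hp * real (card {e\<in>E. z (fst e) \<noteq> z (snd e)})))"
    by (rule sum_mono2[OF finZ WZ]) simp
  also have "\<dots> \<le> 1" unfolding Znc_def V_def
    by (rule nonconst_sum[OF n2 M2 finE EV cardE m1 hp0 hpm finC cardC])
  finally show "(\<Sum>w\<in>{w\<in>{1..n} \<rightarrow>\<^sub>E carrier G. \<not> dist_zero G {1..n} w x}.
           exp (-hp * real (card {e\<in>E. gdiff G (w (fst e)) (w (snd e)) \<noteq> gdiff G (x (fst e)) (x (snd e))}))) \<le> 1"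
    by (simp add: W_def V_def)
  show "mincut {1..n} E \<le> card {e\<in>E. gdiff G (w (fst e)) (w (snd e)) \<noteq> gdiff G (x (fst e)) (x (snd e))}"
    if w: "w \<in> {1..n} \<rightarrow>\<^sub>E carrier G" and nd: "\<not> dist_zero G {1..n} w x" for w
  proof -
    let ?z = "zmap G V x w"
    have wV: "w \<in> V \<rightarrow>\<^sub>E carrier G" using w by (simp add: V_def)
    have 1: "1 \<in> V" using n2 by (simp add: V_def)
    have z1: "?z 1 \<in> carrier G" using zf(1)[OF wV] 1 by auto
    obtain i where i: "i \<in> V" "?z i \<noteq> ?z 1" using zf(4)[OF wV] nd z1 by (auto simp: V_def)
    define S where "S = {j\<in>V. ?z j = ?z 1}"
    have S: "S \<noteq> {}" "S \<subset> V" using 1 i by (auto simp: S_def)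
    have "mincut V E \<le> cut_size E S" by (rule mincut_le[OF _ S]) (simp add: V_def)
    also have "\<dots> \<le> card {e\<in>E. ?z (fst e) \<noteq> ?z (snd e)}"
      unfolding cut_size_def using finE EV' by (intro card_mono) (auto simp: S_def)
    also have "\<dots> = card {e\<in>E. gdiff G (w (fst e)) (w (snd e)) \<noteq> gdiff G (x (fst e)) (x (snd e))}"
      by (simp add: zf(2)[OF wV])
    finally show ?thesis by (simp add: V_def)
  qed
qed


theorem theorem4:
  fixes n M :: nat
    and G :: "nat monoid"
    and E :: "(nat \<times> nat) set"
    and \<mu> :: "'b measure"
    and f :: "nat \<Rightarrow> 'b \<Rightarrow> real"
    and \<psi> :: "((nat \<times> nat) \<Rightarrow> 'b) \<Rightarrow> (nat \<Rightarrow> nat)"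
    and \<delta> :: real
  assumes n2: "n \<ge> 2" and M2: "M \<ge> 2"
    and grp: "group G" and carr: "carrier G = {..<M}"
    and edges: "E \<subseteq> {(i, j). i \<in> {1..n} \<and> j \<in> {1..n} \<and> j < i}"
    and conn: "graph_connected {1..n} E"
    and sf: "sigma_finite_measure \<mu>"
    and f_meas: "\<And>l. l < M \<Longrightarrow> f l \<in> borel_measurable \<mu>"
    and f_nonneg: "\<And>l y. l < M \<Longrightarrow> f l y \<ge> 0"
    and f_prob: "\<And>l. l < M \<Longrightarrow> prob_space (density \<mu> (\<lambda>y. ennreal (f l y)))"
    and mutual_ac: "\<And>l k. l < M \<Longrightarrow> k < M \<Longrightarrow>
       absolutely_continuous (density \<mu> (\<lambda>y. ennreal (f l y))) (density \<mu> (\<lambda>y. ennreal (f k y)))"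
    and psi_meas: "\<psi> \<in> measurable (PiM E (\<lambda>_. \<mu>)) (count_space ({1..n} \<rightarrow>\<^sub>E carrier G))"
    and psi_ml: "is_ml_rule G \<mu> f {1..n} E \<psi>"
    and \<delta>_pos: "\<delta> > 0"
    and cond: "(SUP \<alpha>\<in>{0<..<1}. (1 - \<alpha>) * hel_min \<mu> f M \<alpha>) * real (mincut {1..n} E)
        \<ge> 8 * tau_cut {1..n} E + (\<delta> + 8) * ln (2 * real n) + 4 * ln (real M)"
  shows "err_prob G \<mu> f {1..n} E \<psi> \<le> 1 / ((2 * real n) powr \<delta> - 1)"
proof -
  define V where "V = {1..n::nat}"
  define X where "X = V \<rightarrow>\<^sub>E carrier G"
  define m where "m = mincut V E"
  define \<tau> where "\<tau> = tau_cut V E"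
  define L where "L = ln (2 * real n)"
  define PM where "PM = PiM E (\<lambda>_. \<mu>)"
  have EV: "\<And>e. e \<in> E \<Longrightarrow> fst e \<in> {1..n} \<and> snd e \<in> {1..n}" using edges by auto
  have EsubVV: "E \<subseteq> {1..n} \<times> {1..n}" using edges by auto
  have finE: "finite E" by (rule finite_subset[OF EsubVV]) simp
  have cardE: "card E \<le> n * n"
    using card_mono[OF _ EsubVV] by (simp add: card_cartesian_product)
  have \<tau>0: "\<tau> \<ge> 0" unfolding \<tau>_def by (rule tau_facts(3)) (simp add: V_def)
  have L1: "L \<ge> 1"
  proof -
    have "exp 1 \<le> (3::real)" by (rule exp_le)
    also have "\<dots> \<le> 2 * real n" using n2 by simp
    finally show ?thesis unfolding L_def using n2 by (subst ln_ge_iff) auto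
  qed
  have lM0: "ln (real M) \<ge> 0" using M2 by simp
  have finH: "finite {hel \<mu> (f l) (f k) \<alpha> | l k. l < M \<and> k < M \<and> l \<noteq> k}" for \<alpha>
  proof -
    have "{hel \<mu> (f l) (f k) \<alpha> | l k. l < M \<and> k < M \<and> l \<noteq> k} \<subseteq> (\<lambda>(l,k). hel \<mu> (f l) (f k) \<alpha>) ` ({..<M} \<times> {..<M})"
      by auto
    thus ?thesis by (rule finite_subset) simp
  qed
  have hel_le: "hel_min \<mu> f M \<alpha> \<le> hel \<mu> (f l) (f k) \<alpha>" if "l < M" "k < M" "l \<noteq> k" for \<alpha> l k
    unfolding hel_min_def by (rule Min_le[OF finH]) (use that in auto)
  have bdd: "bdd_above ((\<lambda>\<alpha>. (1 - \<alpha>) * hel_min \<mu> f M \<alpha>) ` {0<..<1})"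
  proof (rule bdd_aboveI[where M=1])
    fix t assume "t \<in> (\<lambda>\<alpha>. (1 - \<alpha>) * hel_min \<mu> f M \<alpha>) ` {0<..<1}"
    then obtain \<alpha> where \<alpha>: "0 < \<alpha>" "\<alpha> < 1" and t: "t = (1 - \<alpha>) * hel_min \<mu> f M \<alpha>" by auto
    have "t \<le> (1 - \<alpha>) * hel \<mu> (f 0) (f 1) \<alpha>"
      unfolding t using \<alpha> M2 by (intro mult_left_mono hel_le) auto
    also have "\<dots> = 1 - (\<integral>y. f 0 y powr \<alpha> * f 1 y powr (1 - \<alpha>) \<partial>\<mu>)"
      using \<alpha> by (simp add: hel_def)
    also have "\<dots> \<le> 1"
      using Bochner_Integration.integral_nonneg[of \<mu> "\<lambda>y. f 0 y powr \<alpha> * f 1 y powr (1 - \<alpha>)"] by simp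
    finally show "t \<le> 1" .
  qed
  define Sp where "Sp = (SUP \<alpha>\<in>{0<..<1}. (1 - \<alpha>) * hel_min \<mu> f M \<alpha>)"
  have cond': "Sp * real m \<ge> 8 * \<tau> + (\<delta> + 8) * L + 4 * ln (real M)"
    using cond by (simp add: Sp_def m_def \<tau>_def L_def V_def)
  have m1: "m \<ge> 1"
  proof (rule ccontr)
    assume "\<not> m \<ge> 1"
    hence "m = 0" by simp
    hence "8 * \<tau> + (\<delta> + 8) * L + 4 * ln (real M) \<le> 0" using cond' by simp
    moreover have "(\<delta> + 8) * L > 0" using \<delta>_pos L1 by simp
    ultimately show False using \<tau>0 lM0 by linarith
  qed
  have "Sp - 1 / real m < Sp" using m1 by simp
  then obtain \<alpha> where \<alpha>: "\<alpha> \<in> {0<..<1}" and hgt: "Sp - 1 / real m < (1 - \<alpha>) * hel_min \<mu> f M \<alpha>"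
    unfolding Sp_def using less_cSUP_iff[OF _ bdd] by auto
  have \<alpha>01: "0 < \<alpha>" "\<alpha> < 1" using \<alpha> by auto
  define h where "h = (1 - \<alpha>) * hel_min \<mu> f M \<alpha>"
  have hm: "h * real m \<ge> 8 * \<tau> + (\<delta> + 8) * L + 4 * ln (real M) - 1"
  proof -
    have "(Sp - 1 / real m) * real m \<le> h * real m"
      using hgt m1 by (intro mult_right_mono) (auto simp: h_def)
    moreover have "(Sp - 1 / real m) * real m = Sp * real m - 1" using m1 by (simp add: algebra_simps)
    ultimately show ?thesis using cond' by linarith
  qed
  define hp where "hp = h - \<delta> * L / real m"
  have hpm_eq: "hp * real m = h * real m - \<delta> * L" using m1 by (simp add: hp_def algebra_simps)
  have hpm: "hp * real m \<ge> 8 * \<tau> + 7 * L + 4 * ln (real M)"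
    using hm hpm_eq L1 by (simp add: algebra_simps)
  have hp0: "hp \<ge> 0"
  proof -
    have "hp * real m \<ge> 0" using hpm \<tau>0 L1 lM0 by linarith
    thus ?thesis using m1 by (simp add: zero_le_mult_iff)
  qed
  have hb: "h \<le> (1 - \<alpha>) * hel \<mu> (f l) (f k) \<alpha>" if "l < M" "k < M" "l \<noteq> k" for l k
    unfolding h_def using \<alpha>01 by (intro mult_left_mono hel_le that) auto
  have gd_lt: "gdiff G (w (fst e)) (w (snd e)) < M" if "w \<in> X" "e \<in> E" for w e
  proof -
    interpret group G by (rule grp)
    have fs: "fst e \<in> V" "snd e \<in> V" using EV[OF that(2)] by (auto simp: V_def)
    have "w (fst e) \<in> carrier G" "w (snd e) \<in> carrier G" using that(1) fs by (auto simp: X_def)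
    hence "gdiff G (w (fst e)) (w (snd e)) \<in> carrier G" by (simp add: gdiff_def)
    thus ?thesis using carr by simp
  qed
  have key: "measure (obs_measure G \<mu> f E x) {y \<in> space (obs_measure G \<mu> f E x). \<not> dist_zero G V (\<psi> y) x}
               \<le> exp (-\<delta> * L)" if x: "x \<in> X" for x
  proof -
    define a where "a w e = gdiff G (w (fst e)) (w (snd e))" for w :: "nat \<Rightarrow> nat" and e :: "nat \<times> nat"
    define Lk where "Lk w y = (\<Prod>e\<in>E. f (a w e) (y e))" for w :: "nat \<Rightarrow> nat" and y :: "nat \<times> nat \<Rightarrow> 'b"
    define W where "W = {w\<in>X. \<not> dist_zero G V w x}"
    have m1n: "mincut {1..n} E \<ge> 1" using m1 by (simp add: m_def V_def)
    have hpmn: "hp * real (mincut {1..n} E) \<ge> 8 * tau_cut {1..n} E + 7 * ln (2 * real n) + 4 * ln (real M)"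
      using hpm by (simp add: m_def V_def \<tau>_def L_def)
    have xn: "x \<in> {1..n} \<rightarrow>\<^sub>E carrier G" using x by (simp add: X_def V_def)
    note WF = W_facts[OF grp carr n2 M2 finE EV cardE m1n hp0 hpmn xn]
    define A where "A w = {y \<in> space PM. Lk x y \<le> Lk w y}" for w
    have obs: "obs_measure G \<mu> f E x = density PM (\<lambda>y. ennreal (Lk x y))"
      unfolding obs_measure_def PM_def Lk_def a_def
      by (rule PiM_density_prod[OF finE sf]) (use gd_lt[OF x] f_meas f_nonneg f_prob in auto)
    have lik: "likelihood G f E w y = Lk w y" for w y by (simp add: likelihood_def Lk_def a_def)
    have finX: "finite X" unfolding X_def using carr by (intro finite_PiE) (auto simp: V_def)
    have finW: "finite W" using finX by (simp add: W_def)
    have Lkm: "Lk w \<in> borel_measurable PM" if "w \<in> X" for w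
      unfolding Lk_def PM_def by (rule meas_prod_comp[OF finE]) (use f_meas gd_lt[OF that] in \<open>auto simp: a_def\<close>)
    have Am: "A w \<in> sets PM" if "w \<in> X" for w
      unfolding A_def using Lkm[OF x] Lkm[OF that] by measurable
    have spc: "space (obs_measure G \<mu> f E x) = space PM" by (simp add: obs)
    have sub: "{y \<in> space (obs_measure G \<mu> f E x). \<not> dist_zero G V (\<psi> y) x} \<subseteq> (\<Union>w\<in>W. A w)"
    proof
      fix y assume y: "y \<in> {y \<in> space (obs_measure G \<mu> f E x). \<not> dist_zero G V (\<psi> y) x}"
      hence yP: "y \<in> space PM" and nd: "\<not> dist_zero G V (\<psi> y) x" using spc by auto
      have ml: "\<psi> y \<in> X" "likelihood G f E x y \<le> likelihood G f E (\<psi> y) y"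
        using psi_ml yP x unfolding is_ml_rule_def PM_def X_def V_def by auto
      hence "\<psi> y \<in> W" "y \<in> A (\<psi> y)" using nd yP by (auto simp: W_def A_def lik)
      thus "y \<in> (\<Union>w\<in>W. A w)" by auto
    qed
    have "emeasure (obs_measure G \<mu> f E x) {y \<in> space (obs_measure G \<mu> f E x). \<not> dist_zero G V (\<psi> y) x}
        \<le> emeasure (obs_measure G \<mu> f E x) (\<Union>w\<in>W. A w)"
      by (rule emeasure_mono[OF sub]) (use Am finW in \<open>auto simp: obs W_def intro!: sets.finite_UN\<close>)
    also have "\<dots> \<le> (\<Sum>w\<in>W. emeasure (obs_measure G \<mu> f E x) (A w))"
      by (rule emeasure_subadditive_finite[OF finW]) (use Am in \<open>auto simp: obs W_def\<close>)
    also have "\<dots> \<le> (\<Sum>w\<in>W. ennreal (exp (-h) ^ card {e\<in>E. a x e \<noteq> a w e}))"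
    proof (rule sum_mono)
      fix w assume w: "w \<in> W"
      hence wX: "w \<in> X" by (simp add: W_def)
      show "emeasure (obs_measure G \<mu> f E x) (A w) \<le> ennreal (exp (-h) ^ card {e\<in>E. a x e \<noteq> a w e})"
        unfolding obs A_def Lk_def PM_def
        by (rule pair_bound[OF finE sf \<alpha>01 f_meas f_nonneg f_prob])
           (use gd_lt[OF x] gd_lt[OF wX] hb in \<open>auto simp: a_def\<close>)
    qed
    also have "\<dots> = ennreal (\<Sum>w\<in>W. exp (-h) ^ card {e\<in>E. a x e \<noteq> a w e})"
      by (rule sum_ennreal) simp
    also have "\<dots> \<le> ennreal (exp (-\<delta> * L))"
    proof (rule ennreal_leI)
      have "(\<Sum>w\<in>W. exp (-h) ^ card {e\<in>E. a x e \<noteq> a w e})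
          \<le> (\<Sum>w\<in>W. exp (-\<delta> * L) * exp (-hp * real (card {e\<in>E. a w e \<noteq> a x e})))"
      proof (rule sum_mono)
        fix w assume w: "w \<in> W"
        define d where "d = card {e\<in>E. a w e \<noteq> a x e}"
        have dsym: "card {e\<in>E. a x e \<noteq> a w e} = d" unfolding d_def by (metis (full_types))
        have dm: "m \<le> d"
          using WF(2)[of w] w by (simp add: d_def a_def m_def V_def W_def X_def)
        have "exp (-h) ^ d = exp (real d * (-h))" by (rule exp_of_nat_mult[symmetric])
        also have "\<dots> \<le> exp (-\<delta> * L + (-hp * real d))"
        proof -
          have "\<delta> * L / real m * real d \<ge> \<delta> * L"
          proof -
            have "\<delta> * L / real m * real d = \<delta> * L * (real d / real m)" by simp
            moreover have "real d / real m \<ge> 1" using dm m1 by simp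
            moreover have "\<delta> * L \<ge> 0" using \<delta>_pos L1 by simp
            ultimately show ?thesis by (metis mult_left_mono mult.right_neutral)
          qed
          moreover have "h = hp + \<delta> * L / real m" by (simp add: hp_def)
          ultimately have "real d * (-h) \<le> -\<delta> * L + (-hp * real d)" by (simp add: algebra_simps)
          thus ?thesis by simp
        qed
        also have "\<dots> = exp (-\<delta> * L) * exp (-hp * real d)" by (rule exp_add)
        finally show "exp (-h) ^ card {e\<in>E. a x e \<noteq> a w e} \<le> exp (-\<delta> * L) * exp (-hp * real (card {e\<in>E. a w e \<noteq> a x e}))"
          by (simp add: dsym d_def)
      qed
      also have "\<dots> = exp (-\<delta> * L) * (\<Sum>w\<in>W. exp (-hp * real (card {e\<in>E. a w e \<noteq> a x e})))"
        by (simp add: sum_distrib_left)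
      also have "\<dots> \<le> exp (-\<delta> * L) * 1"
      proof (rule mult_left_mono)
        show "(\<Sum>w\<in>W. exp (-hp * real (card {e\<in>E. a w e \<noteq> a x e}))) \<le> 1"
          using WF(1) by (simp add: a_def V_def W_def X_def)
      qed simp
      finally show "(\<Sum>w\<in>W. exp (-h) ^ card {e\<in>E. a x e \<noteq> a w e}) \<le> exp (-\<delta> * L)" by simp
    qed
    finally have "emeasure (obs_measure G \<mu> f E x) {y \<in> space (obs_measure G \<mu> f E x). \<not> dist_zero G V (\<psi> y) x}
        \<le> ennreal (exp (-\<delta> * L))" .
    thus ?thesis unfolding measure_def by (intro enn2real_leI) auto
  qed
  have final: "exp (-\<delta> * L) \<le> 1 / ((2 * real n) powr \<delta> - 1)"
  proof -
    have pw: "(2 * real n) powr \<delta> = exp (\<delta> * L)" using n2 by (simp add: powr_def L_def)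
    have t1: "exp (\<delta> * L) > 1" using \<delta>_pos L1 by simp
    have "exp (-\<delta> * L) = 1 / exp (\<delta> * L)" by (simp add: exp_minus inverse_eq_divide)
    also have "\<dots> \<le> 1 / (exp (\<delta> * L) - 1)" using t1 by (intro divide_left_mono) auto
    finally show ?thesis by (simp add: pw)
  qed
  show ?thesis
    unfolding err_prob_def
  proof (rule Max.boundedI)
    have finX: "finite X" unfolding X_def using carr by (intro finite_PiE) (auto simp: V_def)
    show "finite {measure (obs_measure G \<mu> f E x) {y \<in> space (obs_measure G \<mu> f E x). \<not> dist_zero G {1..n} (\<psi> y) x}
          | x. x \<in> {1..n} \<rightarrow>\<^sub>E carrier G}"
      using finX by (simp add: X_def V_def)
    have "restrict (\<lambda>_. 0) {1..n} \<in> {1..n} \<rightarrow>\<^sub>E carrier G" using M2 carr by auto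
    thus "{measure (obs_measure G \<mu> f E x) {y \<in> space (obs_measure G \<mu> f E x). \<not> dist_zero G {1..n} (\<psi> y) x}
          | x. x \<in> {1..n} \<rightarrow>\<^sub>E carrier G} \<noteq> {}"
      by blast
  next
    fix t assume "t \<in> {measure (obs_measure G \<mu> f E x) {y \<in> space (obs_measure G \<mu> f E x). \<not> dist_zero G {1..n} (\<psi> y) x}
          | x. x \<in> {1..n} \<rightarrow>\<^sub>E carrier G}"
    then obtain x where x: "x \<in> X" and t: "t = measure (obs_measure G \<mu> f E x) {y \<in> space (obs_measure G \<mu> f E x). \<not> dist_zero G V (\<psi> y) x}"
      by (auto simp: X_def V_def)
    show "t \<le> 1 / ((2 * real n) powr \<delta> - 1)" using key[OF x] final t by simp
  qed
qed

end
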